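(* Let $\lambda$ be a nonzero real number and let $p$ be a positive integer. For any integer $n\ge1$, \[ \sum_{k=1}^{\infty}\frac{n\,H_{k,\lambda}^{(p)}}{\binom{k+n-1}{n}(k+n)}=\sum_{k=1}^{\infty}\frac{(-\lambda)^{k-1}(1)_{k,1/\lambda}}{(k-1)!\,k^{p}\binom{k+n-1}{n}}. \]
   Context: For real $x$ and $\mu\neq 0$, set $(x)_{0,\mu}=1$ and $(x)_{n,\mu}=x(x-\mu)\cdots(x-(n-1)\mu)$ for $n\ge1$. The degenerate higher-order harmonic numbers are $H_{0,\lambda}^{(k)}=0$ and $H_{n,\lambda}^{(k)}=\sum_{l=1}^{n}\frac{(-\lambda)^{l-1}(1)_{l,1/\lambda}}{l^{k}(l-1)!}$ for $n\ge1$. *)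

theory Defs
  imports "HOL-Analysis.Analysis"
begin

definition gen_falling :: "real \<Rightarrow> nat \<Rightarrow> real \<Rightarrow> real" where
  "gen_falling x n mu = (\<Prod>i<n. x - real i * mu)"

definition deg_harm :: "nat \<Rightarrow> real \<Rightarrow> nat \<Rightarrow> real" where
  "deg_harm n lam k =
     (\<Sum>l=1..n. (-lam)^(l-1) * gen_falling 1 l (1/lam) / (real l ^ k * fact (l-1)))"

end

theory Submission imports Defs begin

lemma suminf_nonsummable_eq:
  fixes f g :: "nat \<Rightarrow> real"
  assumes "\<not> summable f" "\<not> summable g"
  shows "suminf f = suminf g"
proof -
  have "(\<lambda>s. f sums s) = (\<lambda>s. g sums s)" using assms by (auto simp: summable_def)
  then show ?thesis by (simp add: suminf_def)
qed

lemma abel_main: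
  fixes a B :: "nat \<Rightarrow> real" and K :: nat
  assumes Bdec: "\<And>k. B (Suc k) \<le> B k" and Bpos: "\<And>k. 0 \<le> B k" and Blim: "B \<longlonglongrightarrow> 0"
    and apos: "\<And>k. K \<le> k \<Longrightarrow> 0 \<le> a k"
  shows "summable (\<lambda>k. sum a {..k} * (B k - B (Suc k))) = summable (\<lambda>k. a k * B k) \<and>
    (\<Sum>k. sum a {..k} * (B k - B (Suc k))) = (\<Sum>k. a k * B k)"
proof -
  define H where "H = (\<lambda>k. sum a {..k})"
  define s where "s = (\<lambda>k. H k * (B k - B (Suc k)))"
  define r where "r = (\<lambda>k. a k * B k)"
  define D where "D = (\<lambda>N. H N * B (Suc N))"
  have part: "sum s {..<Suc N} = sum r {..<Suc N} - D N" for N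
    by (induction N) (simp_all add: s_def r_def D_def H_def algebra_simps)
  have Hmono: "H m \<le> H n" if "K \<le> m" "m \<le> n" for m n
    using that(2)
  proof (induction n rule: dec_induct)
    case base then show ?case by simp
  next
    case (step n)
    have "0 \<le> a (Suc n)" using apos step that by simp
    then show ?case using step by (simp add: H_def)
  qed
  have tel: "(\<lambda>i. B (i + m) - B (Suc (i + m))) sums B m" for m
  proof -
    have "(\<lambda>i. B (i + m)) \<longlonglongrightarrow> 0" using Blim by (rule LIMSEQ_ignore_initial_segment)
    from telescope_sums'[OF this] show ?thesis by simp
  qed
  have csum: "summable (\<lambda>k. B k - B (Suc k))" using tel[of 0] by (auto simp: sums_iff)
  have key: "summable s \<and> D \<longlonglongrightarrow> 0 \<or> (\<not> summable s \<and> \<not> summable r)"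
  proof (cases "\<exists>M. \<forall>k. \<bar>H k\<bar> \<le> M")
    case True
    then obtain M where M: "\<And>k. \<bar>H k\<bar> \<le> M" by blast
    have "summable s"
    proof (rule summable_comparison_test[OF _ summable_mult[OF csum, of M]])
      show "\<exists>N. \<forall>n\<ge>N. norm (s n) \<le> M * (B n - B (Suc n))"
        using M Bdec by (auto simp: s_def abs_mult intro!: mult_right_mono)
    qed
    moreover have "D \<longlonglongrightarrow> 0"
    proof (rule Lim_null_comparison)
      show "\<forall>\<^sub>F N in sequentially. norm (D N) \<le> M * B (Suc N)"
        using M Bpos by (intro always_eventually allI) (simp add: D_def abs_mult mult_right_mono)
      show "(\<lambda>N. M * B (Suc N)) \<longlonglongrightarrow> 0"
        using tendsto_mult_right_zero[OF LIMSEQ_Suc[OF Blim], of M] by simp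
    qed
    ultimately show ?thesis by blast
  next
    case False
    define M where "M = (\<Sum>j\<le>K. \<bar>H j\<bar>)"
    obtain k0 where k0: "\<bar>H k0\<bar> > M" using False by (meson not_le)
    have le: "\<bar>H j\<bar> \<le> M" if "j \<le> K" for j
      unfolding M_def using that by (intro member_le_sum) auto
    have "k0 > K" using le k0 by (meson linorder_not_le not_le)
    have "H k0 \<ge> H K" using Hmono \<open>k0 > K\<close> by simp
    have "H K \<ge> - M" using le[of K] by simp
    have Hk0: "H k0 > 0"
      using \<open>H k0 \<ge> H K\<close> \<open>H K \<ge> - M\<close> k0 le[of K] by linarith
    have Hpos: "H k \<ge> H k0" if "k \<ge> k0" for k using Hmono \<open>k0 > K\<close> that by simp
    have spos: "s k \<ge> 0" if "k \<ge> k0" for k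
      using Hpos[OF that] Hk0 Bdec[of k] by (simp add: s_def)
    have Dpos: "D k \<ge> 0" if "k \<ge> k0" for k
      using Hpos[OF that] Hk0 Bpos[of "Suc k"] by (simp add: D_def)
    have D0: "D \<longlonglongrightarrow> 0" if ss: "summable s"
    proof (rule Lim_null_comparison)
      define T where "T = (\<lambda>n. suminf s - sum s {..<n})"
      have Tl: "T \<longlonglongrightarrow> 0"
        unfolding T_def using tendsto_diff[OF tendsto_const summable_LIMSEQ[OF ss], of "suminf s"] by simp
      show "(\<lambda>N. T (Suc N)) \<longlonglongrightarrow> 0" using LIMSEQ_Suc[OF Tl] .
      have "norm (D N) \<le> T (Suc N)" if "N \<ge> k0" for N
      proof -
        have Ts: "(\<lambda>i. s (i + Suc N)) sums T (Suc N)"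
          unfolding T_def using sums_split_initial_segment[OF summable_sums[OF ss]] .
        have t2: "(\<lambda>i. H N * (B (i + Suc N) - B (Suc (i + Suc N)))) sums (H N * B (Suc N))"
          using sums_mult[OF tel[of "Suc N"], of "H N"] .
        have "H N * B (Suc N) \<le> T (Suc N)"
        proof (rule sums_le[OF _ t2 Ts])
          fix i
          have "H N \<le> H (i + Suc N)" using Hmono \<open>k0 > K\<close> that by simp
          then show "H N * (B (i + Suc N) - B (Suc (i + Suc N))) \<le> s (i + Suc N)"
            unfolding s_def using Bdec[of "i + Suc N"] by (intro mult_right_mono) auto
        qed
        then show ?thesis using Dpos[OF that] by (simp add: D_def)
      qed
      then show "\<forall>\<^sub>F N in sequentially. norm (D N) \<le> T (Suc N)"
        by (simp add: eventually_at_top_linorder) blast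
    qed
    have rs: "summable s" if sr: "summable r"
    proof -
      define s' where "s' = (\<lambda>k. if k < k0 then 0 else s k)"
      have eq: "summable s' = summable s"
        by (rule summable_cong) (auto simp: s'_def intro: eventually_mono[OF eventually_ge_at_top[of k0]])
      obtain R where R: "\<And>n. norm (sum r {..<n}) \<le> R"
        using convergent_imp_Bseq[OF summable_iff_convergent[THEN iffD1, OF sr]] by (auto simp: Bseq_def)
      have split: "sum s' {..<m} = sum s {..<m} - sum s {..<k0}" if "m \<ge> k0" for m
      proof -
        have "sum s' {..<m} = sum s' {..<k0} + sum s' {k0..<m}"
          using that by (metis sum.atLeastLessThan_concat lessThan_atLeast0 zero_le)
        also have "sum s' {..<k0} = 0" by (simp add: s'_def)
        also have "sum s' {k0..<m} = sum s {k0..<m}" by (simp add: s'_def)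
        also have "sum s {k0..<m} = sum s {..<m} - sum s {..<k0}"
          using that by (metis add_diff_cancel_left' sum.atLeastLessThan_concat lessThan_atLeast0 zero_le)
        finally show ?thesis by simp
      qed
      have "summable s'"
      proof (rule bounded_imp_summable)
        show "0 \<le> s' n" for n using spos by (simp add: s'_def)
        fix n
        have "(\<Sum>k\<le>n. s' k) \<le> sum s' {..<Suc (n + k0)}"
          unfolding lessThan_Suc_atMost[symmetric]
          by (rule sum_mono2) (auto simp: s'_def spos)
        also have "\<dots> = sum r {..<Suc (n + k0)} - D (n + k0) - sum s {..<k0}"
          using split[of "Suc (n+k0)"] part[of "n + k0"] by simp
        also have "\<dots> \<le> R + \<bar>sum s {..<k0}\<bar>"
          using R[of "Suc (n + k0)"] Dpos[of "n + k0"] by auto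
        finally show "(\<Sum>k\<le>n. s' k) \<le> R + \<bar>sum s {..<k0}\<bar>" .
      qed
      then show ?thesis using eq by simp
    qed
    show ?thesis using D0 rs by blast
  qed
  have "(summable s = summable r) \<and> suminf s = suminf r"
  proof (cases "summable s")
    case True
    with key have D0: "D \<longlonglongrightarrow> 0" by blast
    have "(\<lambda>N. sum s {..<Suc N} + D N) \<longlonglongrightarrow> suminf s + 0"
      using LIMSEQ_Suc[OF summable_LIMSEQ[OF True]] D0 by (intro tendsto_add)
    then have "(\<lambda>N. sum r {..<Suc N}) \<longlonglongrightarrow> suminf s" using part by simp
    then have "r sums suminf s" unfolding sums_def using filterlim_sequentially_Suc by blast
    then show ?thesis using True by (simp add: sums_iff)
  next
    case False
    with key have "\<not> summable r" by blast
    with False show ?thesis using suminf_nonsummable_eq by blast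
  qed
  then show ?thesis by (simp add: s_def r_def H_def)
qed

lemma abel_neg:
  fixes a B :: "nat \<Rightarrow> real" and K :: nat
  assumes Bdec: "\<And>k. B (Suc k) \<le> B k" and Bpos: "\<And>k. 0 \<le> B k" and Blim: "B \<longlonglongrightarrow> 0"
    and aneg: "\<And>k. K \<le> k \<Longrightarrow> a k \<le> 0"
  shows "(\<Sum>k. sum a {..k} * (B k - B (Suc k))) = (\<Sum>k. a k * B k)"
proof -
  define x where "x = (\<lambda>k. sum a {..k} * (B k - B (Suc k)))"
  define y where "y = (\<lambda>k. a k * B k)"
  have an: "\<And>k. K \<le> k \<Longrightarrow> 0 \<le> - a k" using aneg by simp
  note A0 = abel_main[where a="\<lambda>k. - a k" and B=B and K=K, OF Bdec Bpos Blim an]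
  have e1: "(\<lambda>k. sum (\<lambda>k. - a k) {..k} * (B k - B (Suc k))) = (\<lambda>k. - x k)"
    by (simp add: x_def sum_negf)
  have e2: "(\<lambda>k. - a k * B k) = (\<lambda>k. - y k)" by (simp add: y_def)
  have A: "summable (\<lambda>k. - x k) = summable (\<lambda>k. - y k)" "suminf (\<lambda>k. - x k) = suminf (\<lambda>k. - y k)"
    using A0 unfolding e1 e2 by auto
  have "suminf x = suminf y"
  proof (cases "summable x")
    case True
    then have sy: "summable y" using A(1) summable_minus_iff by blast
    have "suminf (\<lambda>k. - x k) = - suminf x" using True by (rule suminf_minus)
    moreover have "suminf (\<lambda>k. - y k) = - suminf y" using sy by (rule suminf_minus)
    ultimately show ?thesis using A(2) by simp
  next
    case False
    then have "\<not> summable y" using A(1) summable_minus_iff by blast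
    then show ?thesis using False suminf_nonsummable_eq by blast
  qed
  then show ?thesis by (simp add: x_def y_def)
qed

lemma sign_const:
  fixes P q :: "nat \<Rightarrow> real"
  assumes "\<And>k. M \<le> k \<Longrightarrow> P (Suc k) = P k * q k" "\<And>k. M \<le> k \<Longrightarrow> 0 \<le> q k"
  shows "(\<forall>k\<ge>M. 0 \<le> P k) \<or> (\<forall>k\<ge>M. P k \<le> 0)"
proof (cases "0 \<le> P M")
  case True
  have "0 \<le> P k" if "M \<le> k" for k using that
  proof (induction k rule: dec_induct)
    case (step k) then show ?case using assms[of k] by simp
  qed (use True in simp)
  then show ?thesis by blast
next
  case False
  have "P k \<le> 0" if "M \<le> k" for k using that
  proof (induction k rule: dec_induct)
    case (step k) then show ?case using assms[of k] by (simp add: mult_nonpos_nonneg)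
  qed (use False in simp)
  then show ?thesis by blast
qed

lemma choose_grow:
  assumes "n \<ge> 1"
  shows "(Suc k + n choose n) \<ge> (k + n choose n) + 1"
proof -
  obtain j where j: "n = Suc j" using assms by (cases n) auto
  have "(Suc k + n choose n) = (k + n choose j) + (k + n choose n)"
    using j by simp
  moreover have "0 < (k + n choose j)" using j by (intro zero_less_binomial) simp
  ultimately show ?thesis by linarith
qed

lemma choose_ge:
  assumes "n \<ge> 1"
  shows "(k + n choose n) \<ge> k + 1"
proof (induction k)
  case (Suc k) then show ?case using choose_grow[OF assms, of k] by simp
qed simp

lemma choose_ratio:
  "real (Suc k + n choose n) * real (k + 1) = real (k + n choose n) * real (k + n + 1)"
proof -
  have "(Suc (k + n) - n) * (Suc (k + n) choose n) = Suc (k + n) * ((Suc (k + n) - 1) choose n)"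
    by (rule binomial_absorb_comp)
  then have "(k + 1) * (Suc k + n choose n) = (k + n + 1) * (k + n choose n)"
    by (simp add: Suc_diff_le)
  then show ?thesis by (metis of_nat_mult mult.commute)
qed

theorem theorem4:
  fixes lam :: real and p n :: nat
  assumes "lam \<noteq> 0" and "p \<ge> 1" and "n \<ge> 1"
  shows "(\<Sum>k. real n * deg_harm (k+1) lam p
            / (real ((k+1) + n - 1 choose n) * real ((k+1) + n)))
         = (\<Sum>k. (-lam)^k * gen_falling 1 (k+1) (1/lam)
            / (fact k * real (k+1) ^ p * real ((k+1) + n - 1 choose n)))"
proof -
  define P where "P = (\<lambda>k. (-lam)^k * gen_falling 1 (k+1) (1/lam))"
  define a where "a = (\<lambda>k. P k / (real (k+1) ^ p * fact k))"
  define B where "B = (\<lambda>k. 1 / real (k + n choose n))"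
  have Cpos: "real (k + n choose n) > 0" for k using choose_ge[OF assms(3), of k] by simp
  have Bpos: "0 \<le> B k" for k using Cpos[of k] by (simp add: B_def)
  have Bdec: "B (Suc k) \<le> B k" for k
    using choose_grow[OF assms(3), of k] Cpos[of k] unfolding B_def
    by (intro divide_left_mono) auto
  have Blim: "B \<longlonglongrightarrow> 0"
  proof (rule Lim_null_comparison)
    show "\<forall>\<^sub>F k in sequentially. norm (B k) \<le> inverse (real (Suc k))"
    proof (intro always_eventually allI)
      fix k
      have "real (k + 1) \<le> real (k + n choose n)" using choose_ge[OF assms(3), of k] by linarith
      then show "norm (B k) \<le> inverse (real (Suc k))" using Cpos[of k]
        by (simp add: B_def divide_simps)
    qed
    show "(\<lambda>k. inverse (real (Suc k))) \<longlonglongrightarrow> 0" by (rule LIMSEQ_inverse_real_of_nat)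
  qed
  have Hdef: "deg_harm (k+1) lam p = sum a {..k}" for k
  proof -
    have "deg_harm (k+1) lam p = (\<Sum>l=Suc 0..Suc k. (-lam)^(l-1) * gen_falling 1 l (1/lam) / (real l ^ p * fact (l-1)))"
      by (simp add: deg_harm_def)
    also have "\<dots> = (\<Sum>j=0..k. (-lam)^j * gen_falling 1 (Suc j) (1/lam) / (real (Suc j) ^ p * fact j))"
      by (subst sum.shift_bounds_cl_Suc_ivl) simp
    also have "\<dots> = sum a {..k}" by (simp add: a_def P_def atMost_atLeast0)
    finally show ?thesis .
  qed
  have L: "real n * deg_harm (k+1) lam p / (real ((k+1) + n - 1 choose n) * real ((k+1) + n))
     = sum a {..k} * (B k - B (Suc k))" for k
  proof -
    have r: "real (Suc k + n choose n) = real (k + n choose n) * real (k + n + 1) / real (k+1)"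
      using choose_ratio[of k n] by (simp add: field_simps)
    have "B k - B (Suc k) = real n / (real (k + n choose n) * real (k + 1 + n))"
    proof -
      have c: "real (k + n choose n) \<noteq> 0" using Cpos[of k] by simp
      have d: "real (k + n + 1) \<noteq> 0" "real (k+1) \<noteq> 0" by auto
      show ?thesis unfolding B_def r using c d
        by (simp add: divide_simps)
    qed
    moreover have "deg_harm (Suc k) lam p = sum a {..k}" using Hdef[of k] by simp
    ultimately show ?thesis by simp
  qed
  have R: "(-lam)^k * gen_falling 1 (k+1) (1/lam)
            / (fact k * real (k+1) ^ p * real ((k+1) + n - 1 choose n)) = a k * B k" for k
    by (simp add: a_def P_def B_def mult.commute)
  define M where "M = nat (ceiling lam)"
  have Prec: "P (Suc k) = P k * (real (k+1) - lam)" for k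
    using assms(1) by (simp add: P_def gen_falling_def field_simps)
  have qpos: "0 \<le> real (k+1) - lam" if "M \<le> k" for k
    using that unfolding M_def by linarith
  have sgn: "(\<forall>k\<ge>M. 0 \<le> P k) \<or> (\<forall>k\<ge>M. P k \<le> 0)"
    by (rule sign_const[of M P "\<lambda>k. real (k+1) - lam"]) (use Prec qpos in auto)
  have "(\<Sum>k. sum a {..k} * (B k - B (Suc k))) = (\<Sum>k. a k * B k)"
    using sgn
  proof
    assume "\<forall>k\<ge>M. 0 \<le> P k"
    then have "\<And>k. M \<le> k \<Longrightarrow> 0 \<le> a k" by (simp add: a_def)
    then show ?thesis using abel_main[OF Bdec Bpos Blim] by blast
  next
    assume "\<forall>k\<ge>M. P k \<le> 0"
    then have "\<And>k. M \<le> k \<Longrightarrow> a k \<le> 0" by (simp add: a_def divide_nonpos_pos)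
    then show ?thesis using abel_neg[OF Bdec Bpos Blim] by blast
  qed
  then show ?thesis by (simp only: L R)
qed

end
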